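(* Let $E$ be a Banach lattice with an order continuous norm, let $\mathfrak{B}$ be a Boolean subalgebra of $\mathfrak{B}(E)$, let $T\colon E\to E$ be a $\mathfrak{B}$-Volterra operator and let $\xi^1,\xi^2,\xi^3$ be forward filtrations in $\mathfrak{B}$. If $S_1\in\mathcal{L}_T(\xi^1,\xi^2)$ and $S_2\in\mathcal{L}_T(\xi^2,\xi^3)$ then $S_2S_1\in\mathcal{L}_T(\xi^1,\xi^3)$. For every $S\in\mathcal{L}_T(\xi^1,\xi^2)$ there is a norm continuous operator $\hat{L}(S)\in\mathcal{L}_T(L(\xi^1),L(\xi^2))$ such that $\hat{L}(S)\circ\mathbf{s}=\mathbf{s}\circ S$.
   Context: $\mathfrak{B}(E)$ is the Boolean algebra of all order projections on $E$ ($\pi\le\rho$ iff $\pi\rho=\pi$, zero $\mathbf 0$, unit $\mathbf 1=I_E$). A positive operator $T$ is $\mathfrak{B}$-Volterra if for all $\pi\in\mathfrak{B}$, $x,y\in E$, $\pi x=\pi y$ implies $\pi Tx=\pi Ty$. A forward filtration in $\mathfrak{B}$ is a map $\xi\colon\{0,1,\dots,\infty\}\to\mathfrak{B}$ with $\xi_n\le\xi_{n+1}$, $\xi_0=\mathbf 0$, $\xi_\infty=\mathbf 1$; $L(\xi)_0=\xi_0$, $L(\xi)_n=\xi_{n+1}$ ($n\ge1$). $\mathcal{M}_b(\xi)$: sequences $(x_n)_{n\ge1}$ in $E$ with $\xi_nx_m=x_n$ for $m\ge n\ge1$ and $\sup_n\|x_n\|<\infty$; $\mathcal{M}_r(\xi)=\{x^1-x^2:x^i\in\mathcal{M}_b(\xi)^+\}$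 with regular norm $\|x\|_r=\inf\{\sup_n\|y_n\|:y\in\mathcal{M}_b(\xi)^+,\pm x\le y\}$. $\hat{T}_\xi((x_n))=(\xi_nTx_n)$; $\mathbf{s}((x_n)_{n\ge1})=(x_{n+1})_{n\ge1}$ maps $\mathcal{M}_r(\xi)$ to $\mathcal{M}_r(L(\xi))$. $\mathcal{L}_T(\eta^1,\eta^2)$ is the set of norm continuous operators $S\colon\mathcal{M}_r(\eta^1)\to\mathcal{M}_r(\eta^2)$ with $S\circ\hat{T}_{\eta^1}=\hat{T}_{\eta^2}\circ S$. *)

theory Defs
  imports "HOL-Analysis.Analysis" "HOL-Library.Extended_Nat"
begin

text \<open>Banach lattices are modelled as types of sort banach, ordered_real_vector, lattice
  (a complete normed Riesz space) together with the lattice-norm axiom below.\<close>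

definition babs :: "'a::{ab_group_add, lattice} \<Rightarrow> 'a" where
  "babs x = sup x (- x)"

definition banach_lattice :: "'a::{banach, ordered_real_vector, lattice} itself \<Rightarrow> bool" where
  "banach_lattice _ \<longleftrightarrow> (\<forall>x y::'a. babs x \<le> babs y \<longrightarrow> norm x \<le> norm y)"

text \<open>Order continuous norm: every downward directed set (a decreasing net indexed by itself)
  with infimum 0 converges in norm to 0.\<close>
definition order_continuous_norm :: "'a::{banach, ordered_real_vector, lattice} itself \<Rightarrow> bool" where
  "order_continuous_norm _ \<longleftrightarrow>
    (\<forall>D::'a set. D \<noteq> {} \<and> (\<forall>a\<in>D. \<forall>b\<in>D. \<exists>c\<in>D. c \<le> a \<and> c \<le> b)
       \<and> (\<forall>x\<in>D. 0 \<le> x) \<and> (\<forall>z. (\<forall>x\<in>D. z \<le> x) \<longrightarrow> z \<le> 0)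
       \<longrightarrow> (\<forall>e>0. \<exists>x\<in>D. \<forall>y\<in>D. y \<le> x \<longrightarrow> norm y < e))"

definition order_projection :: "('a::{banach, ordered_real_vector, lattice} \<Rightarrow> 'a) \<Rightarrow> bool" where
  "order_projection p \<longleftrightarrow> linear p \<and> p \<circ> p = p \<and> (\<forall>x. 0 \<le> x \<longrightarrow> 0 \<le> p x \<and> p x \<le> x)"

definition proj_le :: "('a \<Rightarrow> 'a) \<Rightarrow> ('a \<Rightarrow> 'a) \<Rightarrow> bool" where
  "proj_le p q \<longleftrightarrow> p \<circ> q = p"

text \<open>Boolean subalgebra of the Boolean algebra of all order projections
  (meet = composition, join = p + q - pq, complement = I - p, zero = 0, unit = I).\<close>
definition boolean_subalgebra :: "(('a::{banach, ordered_real_vector, lattice} \<Rightarrow> 'a)) set \<Rightarrow> bool" where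
  "boolean_subalgebra B \<longleftrightarrow> B \<subseteq> {p. order_projection p} \<and> (\<lambda>x. 0) \<in> B \<and> id \<in> B
     \<and> (\<forall>p\<in>B. \<forall>q\<in>B. p \<circ> q \<in> B \<and> (\<lambda>x. p x + q x - p (q x)) \<in> B)
     \<and> (\<forall>p\<in>B. (\<lambda>x. x - p x) \<in> B)"

definition positive_operator :: "('a::{banach, ordered_real_vector, lattice} \<Rightarrow> 'a) \<Rightarrow> bool" where
  "positive_operator T \<longleftrightarrow> linear T \<and> (\<forall>x. 0 \<le> x \<longrightarrow> 0 \<le> T x)"

definition B_volterra :: "('a::{banach, ordered_real_vector, lattice} \<Rightarrow> 'a) set \<Rightarrow> ('a \<Rightarrow> 'a) \<Rightarrow> bool" where
  "B_volterra B T \<longleftrightarrow> positive_operator T \<and>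
     (\<forall>p\<in>B. \<forall>x y. p x = p y \<longrightarrow> p (T x) = p (T y))"

definition forward_filtration :: "('a::{banach, ordered_real_vector, lattice} \<Rightarrow> 'a) set \<Rightarrow> (enat \<Rightarrow> 'a \<Rightarrow> 'a) \<Rightarrow> bool" where
  "forward_filtration B \<xi> \<longleftrightarrow> (\<forall>n. \<xi> n \<in> B) \<and> (\<forall>n. proj_le (\<xi> n) (\<xi> (n + 1)))
     \<and> \<xi> 0 = (\<lambda>x. 0) \<and> \<xi> \<infinity> = id"

definition Lfilt :: "(enat \<Rightarrow> 'a \<Rightarrow> 'a) \<Rightarrow> enat \<Rightarrow> 'a \<Rightarrow> 'a" where
  "Lfilt \<xi> n = (if n = 0 then \<xi> 0 else \<xi> (n + 1))"

text \<open>Sequences (x_n)_{n\<ge>1} are represented as functions nat \<Rightarrow> 'a with x 0 = 0.\<close>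
definition Mb :: "(enat \<Rightarrow> 'a \<Rightarrow> 'a) \<Rightarrow> (nat \<Rightarrow> 'a::{banach, ordered_real_vector, lattice}) set" where
  "Mb \<xi> = {x. x 0 = 0 \<and> (\<forall>n m. 1 \<le> n \<and> n \<le> m \<longrightarrow> \<xi> (enat n) (x m) = x n)
              \<and> (\<exists>C. \<forall>n\<ge>1. norm (x n) \<le> C)}"

definition Mb_pos :: "(enat \<Rightarrow> 'a \<Rightarrow> 'a) \<Rightarrow> (nat \<Rightarrow> 'a::{banach, ordered_real_vector, lattice}) set" where
  "Mb_pos \<xi> = {x \<in> Mb \<xi>. \<forall>n\<ge>1. 0 \<le> x n}"

definition Mr :: "(enat \<Rightarrow> 'a \<Rightarrow> 'a) \<Rightarrow> (nat \<Rightarrow> 'a::{banach, ordered_real_vector, lattice}) set" where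
  "Mr \<xi> = {x. \<exists>a\<in>Mb_pos \<xi>. \<exists>b\<in>Mb_pos \<xi>. x = (\<lambda>n. a n - b n)}"

definition rnorm :: "(enat \<Rightarrow> 'a \<Rightarrow> 'a) \<Rightarrow> (nat \<Rightarrow> 'a::{banach, ordered_real_vector, lattice}) \<Rightarrow> real" where
  "rnorm \<xi> x = Inf {(SUP n\<in>{1..}. norm (y n)) | y. y \<in> Mb_pos \<xi> \<and> (\<forall>n\<ge>1. x n \<le> y n \<and> - x n \<le> y n)}"

definition That :: "('a \<Rightarrow> 'a) \<Rightarrow> (enat \<Rightarrow> 'a \<Rightarrow> 'a) \<Rightarrow> (nat \<Rightarrow> 'a::zero) \<Rightarrow> nat \<Rightarrow> 'a" where
  "That T \<xi> x = (\<lambda>n. if n = 0 then 0 else \<xi> (enat n) (T (x n)))"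

definition sshift :: "(nat \<Rightarrow> 'a::zero) \<Rightarrow> nat \<Rightarrow> 'a" where
  "sshift x = (\<lambda>n. if n = 0 then 0 else x (Suc n))"

definition LT :: "('a \<Rightarrow> 'a) \<Rightarrow> (enat \<Rightarrow> 'a \<Rightarrow> 'a) \<Rightarrow> (enat \<Rightarrow> 'a \<Rightarrow> 'a)
    \<Rightarrow> ((nat \<Rightarrow> 'a::{banach, ordered_real_vector, lattice}) \<Rightarrow> (nat \<Rightarrow> 'a)) set" where
  "LT T \<eta>1 \<eta>2 = {S. (\<forall>x\<in>Mr \<eta>1. S x \<in> Mr \<eta>2)
     \<and> (\<forall>x\<in>Mr \<eta>1. \<forall>y\<in>Mr \<eta>1. S (\<lambda>n. x n + y n) = (\<lambda>n. S x n + S y n))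
     \<and> (\<forall>c. \<forall>x\<in>Mr \<eta>1. S (\<lambda>n. c *\<^sub>R x n) = (\<lambda>n. c *\<^sub>R S x n))
     \<and> (\<forall>x\<in>Mr \<eta>1. \<forall>e>0. \<exists>d>0. \<forall>y\<in>Mr \<eta>1.
          rnorm \<eta>1 (\<lambda>n. y n - x n) < d \<longrightarrow> rnorm \<eta>2 (\<lambda>n. S y n - S x n) < e)
     \<and> (\<forall>x\<in>Mr \<eta>1. S (That T \<eta>1 x) = That T \<eta>2 (S x))}"

end

theory Submission
  imports Defs
begin

lemma babs_pos: "0 \<le> (x::'a::{ordered_ab_group_add, lattice}) \<Longrightarrow> babs x = x"
  unfolding babs_def by (simp add: sup_absorb1 order_trans[of "-x" 0 x])

lemma op_linear: "order_projection p \<Longrightarrow> linear p"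
  by (simp add: order_projection_def)

lemma op_idem: "order_projection p \<Longrightarrow> p (p x) = p x"
  unfolding order_projection_def by (metis comp_apply)

lemma op_pos: "order_projection p \<Longrightarrow> 0 \<le> x \<Longrightarrow> 0 \<le> p x"
  by (simp add: order_projection_def)

lemma op_mono: "order_projection p \<Longrightarrow> a \<le> b \<Longrightarrow> p a \<le> p b"
proof -
  assume p: "order_projection p" and ab: "a \<le> b"
  have "0 \<le> p (b - a)" using op_pos[OF p] ab by simp
  also have "p (b - a) = p b - p a" using linear_diff[OF op_linear[OF p]] .
  finally show ?thesis by simp
qed

lemma op_norm:
  assumes BL: "banach_lattice TYPE('a::{banach, ordered_real_vector, lattice})"
    and p: "order_projection (p::'a\<Rightarrow>'a)" and x: "0 \<le> x"
  shows "norm (p x) \<le> norm x"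
proof -
  have "0 \<le> p x" "p x \<le> x" using p x by (auto simp: order_projection_def)
  then have "babs (p x) \<le> babs x" using x by (simp add: babs_pos)
  then show ?thesis using BL unfolding banach_lattice_def by blast
qed

type_synonym 'a filt = "enat \<Rightarrow> 'a \<Rightarrow> 'a"

lemma Mb_bdd: "w \<in> Mb \<eta> \<Longrightarrow> bdd_above ((\<lambda>n. norm (w n)) ` {1..})"
  unfolding Mb_def bdd_above_def by auto

lemma Mb_le_SUP: "w \<in> Mb \<eta> \<Longrightarrow> 1 \<le> n \<Longrightarrow> norm (w n) \<le> (SUP n\<in>{1..}. norm (w n))"
  by (rule cSUP_upper[OF _ Mb_bdd]) auto

lemma Mb_SUP_nonneg: "w \<in> Mb \<eta> \<Longrightarrow> 0 \<le> (SUP n\<in>{1..}. norm (w n))"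
  using Mb_le_SUP[of w \<eta> 1] norm_ge_zero[of "w 1"] by linarith

lemma Mb_pos_add:
  assumes OP: "\<forall>n. order_projection (\<eta> n)"
    and a: "a \<in> Mb_pos \<eta>" and b: "b \<in> Mb_pos \<eta>"
  shows "(\<lambda>n. a n + b n) \<in> Mb_pos \<eta>"
proof -
  obtain Ca where Ca: "\<forall>n\<ge>1. norm (a n) \<le> Ca" using a unfolding Mb_pos_def Mb_def by blast
  obtain Cb where Cb: "\<forall>n\<ge>1. norm (b n) \<le> Cb" using b unfolding Mb_pos_def Mb_def by blast
  have "\<forall>n\<ge>1. norm (a n + b n) \<le> Ca + Cb"
    using Ca Cb by (meson add_mono norm_triangle_ineq order_trans)
  moreover have "\<forall>n m. 1 \<le> n \<and> n \<le> m \<longrightarrow> \<eta> (enat n) (a m + b m) = a n + b n"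
    using a b linear_add[OF op_linear[OF OP[rule_format]]] unfolding Mb_pos_def Mb_def by auto
  ultimately show ?thesis using a b unfolding Mb_pos_def Mb_def by auto
qed

lemma Mr_cond:
  assumes OP: "\<forall>n. order_projection (\<eta> n)" and x: "x \<in> Mr \<eta>" and "1 \<le> n" "n \<le> m"
  shows "\<eta> (enat n) (x m) = x n"
proof -
  obtain a b where a: "a \<in> Mb_pos \<eta>" and b: "b \<in> Mb_pos \<eta>" and xe: "x = (\<lambda>n. a n - b n)"
    using x unfolding Mr_def by blast
  show ?thesis using a b assms(3,4) linear_diff[OF op_linear[OF OP[rule_format]]]
    unfolding xe Mb_pos_def Mb_def by auto
qed

lemma Mr_zero: "x \<in> Mr \<eta> \<Longrightarrow> x 0 = 0"
  unfolding Mr_def Mb_pos_def Mb_def by auto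

lemma Mr_diff:
  assumes OP: "\<forall>n. order_projection (\<eta> n)" and x: "x \<in> Mr \<eta>" and y: "y \<in> Mr \<eta>"
  shows "(\<lambda>n. x n - y n) \<in> Mr \<eta>"
proof -
  obtain a b where a: "a \<in> Mb_pos \<eta>" and b: "b \<in> Mb_pos \<eta>" and xe: "x = (\<lambda>n. a n - b n)"
    using x unfolding Mr_def by blast
  obtain c d where c: "c \<in> Mb_pos \<eta>" and d: "d \<in> Mb_pos \<eta>" and ye: "y = (\<lambda>n. c n - d n)"
    using y unfolding Mr_def by blast
  have "(\<lambda>n. x n - y n) = (\<lambda>n. (a n + d n) - (b n + c n))" unfolding xe ye by (simp add: algebra_simps)
  then show ?thesis unfolding Mr_def mem_Collect_eq
    by (rule bexI[OF bexI[OF _ Mb_pos_add[OF OP b c]] Mb_pos_add[OF OP a d]])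
qed

lemma Mr_dom:
  assumes OP: "\<forall>n. order_projection (\<eta> n)" and x: "x \<in> Mr \<eta>"
  shows "\<exists>w\<in>Mb_pos \<eta>. \<forall>n\<ge>1. x n \<le> w n \<and> - x n \<le> w n"
proof -
  obtain a b where a: "a \<in> Mb_pos \<eta>" and b: "b \<in> Mb_pos \<eta>" and xe: "x = (\<lambda>n. a n - b n)"
    using x unfolding Mr_def by blast
  have "\<forall>n\<ge>1. x n \<le> a n + b n \<and> - x n \<le> a n + b n"
  proof (intro allI impI)
    fix n :: nat assume n: "1 \<le> n"
    have a0: "0 \<le> a n" using a n unfolding Mb_pos_def by blast
    have b0: "0 \<le> b n" using b n unfolding Mb_pos_def by blast
    have na: "- a n \<le> a n" using order_trans[OF neg_le_0_iff_le[THEN iffD2, OF a0] a0] .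
    have nb: "- b n \<le> b n" using order_trans[OF neg_le_0_iff_le[THEN iffD2, OF b0] b0] .
    have 1: "a n + - b n \<le> a n + b n" using nb by (rule add_left_mono)
    have 2: "- a n + b n \<le> a n + b n" using na by (rule add_right_mono)
    have e1: "x n = a n + - b n" unfolding xe by simp
    have e2: "- x n = - a n + b n" unfolding xe by simp
    show "x n \<le> a n + b n \<and> - x n \<le> a n + b n"
      using 1 2 unfolding e1[symmetric] e2[symmetric] by (rule conjI)
  qed
  then show ?thesis using Mb_pos_add[OF OP a b] by (rule bexI)
qed

lemma Inf_le_aux:
  fixes X Y :: "real set"
  assumes "X \<noteq> {}" "bdd_below Y" "\<And>s. s \<in> X \<Longrightarrow> \<exists>t\<in>Y. t \<le> s"
  shows "Inf Y \<le> Inf X"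
proof (rule cInf_greatest[OF assms(1)])
  fix s assume "s \<in> X"
  then have "\<exists>t\<in>Y. t \<le> s" by (rule assms(3))
  then obtain t where t: "t \<in> Y" "t \<le> s" ..
  show "Inf Y \<le> s" by (rule order_trans[OF cInf_lower[OF t(1) assms(2)] t(2)])
qed

definition domset :: "(enat \<Rightarrow> 'a \<Rightarrow> 'a) \<Rightarrow> (nat \<Rightarrow> 'a::{banach, ordered_real_vector, lattice}) \<Rightarrow> real set" where
  "domset \<eta> x = {(SUP n\<in>{1..}. norm (y n)) | y. y \<in> Mb_pos \<eta> \<and> (\<forall>n\<ge>1. x n \<le> y n \<and> - x n \<le> y n)}"

lemma rnorm_domset: "rnorm \<eta> x = Inf (domset \<eta> x)"
  unfolding rnorm_def domset_def ..

lemma domset_mem: "t \<in> domset \<eta> x \<longleftrightarrow> (\<exists>y. t = (SUP n\<in>{1..}. norm (y n)) \<and> y \<in> Mb_pos \<eta> \<and> (\<forall>n\<ge>1. x n \<le> y n \<and> - x n \<le> y n))"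
  unfolding domset_def mem_Collect_eq ..

lemma domset_intro: "y \<in> Mb_pos \<eta> \<Longrightarrow> (\<forall>n\<ge>1. x n \<le> y n \<and> - x n \<le> y n) \<Longrightarrow> (SUP n\<in>{1..}. norm (y n)) \<in> domset \<eta> x"
  unfolding domset_mem by (intro exI[of _ y] conjI refl)

lemma domset_elim:
  assumes "t \<in> domset \<eta> x"
  obtains y where "y \<in> Mb_pos \<eta>" "\<forall>n\<ge>1. x n \<le> y n \<and> - x n \<le> y n" "t = (SUP n\<in>{1..}. norm (y n))"
proof -
  from assms obtain y where h: "t = (SUP n\<in>{1..}. norm (y n)) \<and> y \<in> Mb_pos \<eta> \<and> (\<forall>n\<ge>1. x n \<le> y n \<and> - x n \<le> y n)"
    unfolding domset_mem ..
  show ?thesis using h by (intro that) (elim conjE, assumption)+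
qed

lemma domset_bdd: "bdd_below (domset \<eta> x)"
proof (rule bdd_belowI[of _ 0])
  fix t assume "t \<in> domset \<eta> x"
  then obtain y where y: "y \<in> Mb_pos \<eta>" "t = (SUP n\<in>{1..}. norm (y n))" by (rule domset_elim)
  have "y \<in> Mb \<eta>" using y(1) unfolding Mb_pos_def by simp
  then show "0 \<le> t" unfolding y(2) by (rule Mb_SUP_nonneg)
qed

lemma rnorm_le:
  assumes OP: "\<forall>n. order_projection (\<eta> n)" and u: "u \<in> Mr \<eta>"
    and H: "\<And>w. w \<in> Mb_pos \<eta> \<Longrightarrow> (\<forall>n\<ge>1. u n \<le> w n \<and> - u n \<le> w n) \<Longrightarrow>
       \<exists>w'\<in>Mb_pos \<eta>'. (\<forall>n\<ge>1. v n \<le> w' n \<and> - v n \<le> w' n)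
          \<and> (SUP n\<in>{1..}. norm (w' n)) \<le> (SUP n\<in>{1..}. norm (w n))"
  shows "rnorm \<eta>' v \<le> rnorm \<eta> u"
  unfolding rnorm_domset
proof (rule Inf_le_aux[OF _ domset_bdd])
  obtain w where w: "w \<in> Mb_pos \<eta>" "\<forall>n\<ge>1. u n \<le> w n \<and> - u n \<le> w n" using Mr_dom[OF OP u] ..
  have "(SUP n\<in>{1..}. norm (w n)) \<in> domset \<eta> u" using w by (rule domset_intro)
  then show "domset \<eta> u \<noteq> {}" by (rule ex_in_conv[THEN iffD1, OF exI])
next
  fix s assume "s \<in> domset \<eta> u"
  then obtain w where w: "w \<in> Mb_pos \<eta>" "\<forall>n\<ge>1. u n \<le> w n \<and> - u n \<le> w n"
    and s: "s = (SUP n\<in>{1..}. norm (w n))" by (rule domset_elim)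
  obtain w' where w': "w' \<in> Mb_pos \<eta>'" and h: "(\<forall>n\<ge>1. v n \<le> w' n \<and> - v n \<le> w' n)
          \<and> (SUP n\<in>{1..}. norm (w' n)) \<le> (SUP n\<in>{1..}. norm (w n))" using H[OF w] ..
  have "(SUP n\<in>{1..}. norm (w' n)) \<in> domset \<eta>' v" using w' h[THEN conjunct1] by (rule domset_intro)
  then show "\<exists>t\<in>domset \<eta>' v. t \<le> s" using h[THEN conjunct2] unfolding s by (rule bexI[rotated])
qed

definition unsh :: "(enat \<Rightarrow> 'a \<Rightarrow> 'a) \<Rightarrow> (nat \<Rightarrow> 'a::zero) \<Rightarrow> nat \<Rightarrow> 'a" where
  "unsh \<xi> y n = (if n = 0 then 0 else if n = 1 then \<xi> (enat 1) (y 1) else y (n - 1))"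

lemma Lfilt_enat: "1 \<le> n \<Longrightarrow> Lfilt \<xi> (enat n) = \<xi> (enat (Suc n))"
  unfolding Lfilt_def by (simp add: plus_1_eSuc eSuc_enat enat_0_iff)

lemma Lfilt_OP: "\<forall>n. order_projection (\<xi> n) \<Longrightarrow> \<forall>n. order_projection (Lfilt \<xi> n)"
  unfolding Lfilt_def by simp

lemma ff_12:
  assumes "forward_filtration B \<xi>"
  shows "\<xi> (enat 1) (\<xi> (enat 2) v) = \<xi> (enat 1) v"
proof -
  have h: "\<forall>n. proj_le (\<xi> n) (\<xi> (n + 1))" using assms unfolding forward_filtration_def by (elim conjE)
  have e: "enat 1 + 1 = enat 2" by (simp add: plus_1_eSuc eSuc_enat numeral_2_eq_2)
  have "\<xi> (enat 1) \<circ> \<xi> (enat 2) = \<xi> (enat 1)" using h[rule_format, of "enat 1"] unfolding e proj_le_def .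
  then have "(\<xi> (enat 1) \<circ> \<xi> (enat 2)) v = \<xi> (enat 1) v" by (rule fun_cong)
  then show ?thesis by simp
qed

lemma unsh_Mb_pos:
  assumes BL: "banach_lattice TYPE('a::{banach, ordered_real_vector, lattice})"
    and OP: "\<forall>n. order_projection (\<xi> n)" and FF: "forward_filtration B \<xi>"
    and a: "a \<in> Mb_pos (Lfilt \<xi>)"
  shows "unsh \<xi> (a::nat \<Rightarrow> 'a) \<in> Mb_pos \<xi>"
proof -
  have aMb: "a \<in> Mb (Lfilt \<xi>)" and apos': "\<forall>n\<ge>1. 0 \<le> a n" using a unfolding Mb_pos_def by blast+
  have apos: "\<And>n. 1 \<le> n \<Longrightarrow> 0 \<le> a n" using apos' by blast
  have acond: "\<forall>n m. 1 \<le> n \<and> n \<le> m \<longrightarrow> Lfilt \<xi> (enat n) (a m) = a n"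
    using aMb unfolding Mb_def by blast
  have ac: "\<xi> (enat (Suc n)) (a m) = a n" if "1 \<le> n" "n \<le> m" for n m
  proof -
    have "Lfilt \<xi> (enat n) (a m) = a n" using acond that by blast
    then show ?thesis unfolding Lfilt_enat[OF that(1)] .
  qed
  obtain C where C: "\<forall>n\<ge>1. norm (a n) \<le> C" using aMb unfolding Mb_def by blast
  have p1: "order_projection (\<xi> (enat 1))" using OP by blast
  have bnd: "\<forall>n\<ge>1. norm (unsh \<xi> a n) \<le> C"
  proof (intro allI impI)
    fix n :: nat assume n: "1 \<le> n"
    show "norm (unsh \<xi> a n) \<le> C"
    proof (cases "n = 1")
      case True
      then have "unsh \<xi> a n = \<xi> (enat 1) (a 1)" by (simp add: unsh_def)
      moreover have "norm (a 1) \<le> C" using C by simp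
      ultimately show ?thesis using op_norm[OF BL p1 apos[of 1]] by simp
    next
      case False
      then have e: "unsh \<xi> a n = a (n - 1)" using n by (simp add: unsh_def)
      have "1 \<le> n - 1" using False n by arith
      then have "norm (a (n - 1)) \<le> C" using C by blast
      then show ?thesis unfolding e .
    qed
  qed
  have cond: "\<forall>n m. 1 \<le> n \<and> n \<le> m \<longrightarrow> \<xi> (enat n) (unsh \<xi> a m) = unsh \<xi> a n"
  proof (intro allI impI)
    fix n m :: nat assume nm: "1 \<le> n \<and> n \<le> m"
    show "\<xi> (enat n) (unsh \<xi> a m) = unsh \<xi> a n"
    proof (cases "n = 1")
      case True
      show ?thesis
      proof (cases "m = 1")
        case True
        then show ?thesis using \<open>n = 1\<close> op_idem[OF p1] unfolding unsh_def by simp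
      next
        case False
        have "a 1 = \<xi> (enat 2) (a (m - 1))" using ac[of 1 "m - 1"] False nm \<open>n = 1\<close> by (simp add: numeral_2_eq_2)
        then have "\<xi> (enat 1) (a 1) = \<xi> (enat 1) (a (m - 1))" using ff_12[OF FF] by simp
        then show ?thesis using \<open>n = 1\<close> False nm unfolding unsh_def by simp
      qed
    next
      case False
      then have "1 \<le> n - 1" "n - 1 \<le> m - 1" using nm by arith+
      then have "\<xi> (enat (Suc (n - 1))) (a (m - 1)) = a (n - 1)" using ac[of "n - 1" "m - 1"] by blast
      then show ?thesis using False nm unfolding unsh_def by simp
    qed
  qed
  have pos: "\<forall>n\<ge>1. 0 \<le> unsh \<xi> a n"
  proof (intro allI impI)
    fix n :: nat assume n: "1 \<le> n"
    show "0 \<le> unsh \<xi> a n"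
    proof (cases "n = 1")
      case True
      then show ?thesis using op_pos[OF p1 apos[of 1]] by (simp add: unsh_def)
    next
      case False
      then have e: "unsh \<xi> a n = a (n - 1)" using n by (simp add: unsh_def)
      have "1 \<le> n - 1" using False n by arith
      then show ?thesis unfolding e using apos by blast
    qed
  qed
  have z: "unsh \<xi> a 0 = 0" by (simp add: unsh_def)
  have "unsh \<xi> a \<in> Mb \<xi>" unfolding Mb_def mem_Collect_eq
    apply (intro conjI z cond)
    apply (rule exI[of _ C])
    apply (rule bnd)
    done
  then show ?thesis unfolding Mb_pos_def mem_Collect_eq using pos by (rule conjI)
qed

lemma unsh_diff:
  assumes OP: "\<forall>n. order_projection (\<xi> n)"
  shows "unsh \<xi> (\<lambda>n. a n - b n) = (\<lambda>n. unsh \<xi> a n - unsh \<xi> b n)"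
  using linear_diff[OF op_linear[OF OP[rule_format]]] unfolding unsh_def by auto

lemma unsh_add:
  assumes OP: "\<forall>n. order_projection (\<xi> n)"
  shows "unsh \<xi> (\<lambda>n. a n + b n) = (\<lambda>n. unsh \<xi> a n + unsh \<xi> b n)"
  using linear_add[OF op_linear[OF OP[rule_format]]] unfolding unsh_def by auto

lemma unsh_scale:
  assumes OP: "\<forall>n. order_projection (\<xi> n)"
  shows "unsh \<xi> (\<lambda>n. c *\<^sub>R a n) = (\<lambda>n. c *\<^sub>R unsh \<xi> a n)"
  using linear_scale[OF op_linear[OF OP[rule_format]]] unfolding unsh_def by auto

lemma unsh_Mr:
  assumes BL: "banach_lattice TYPE('a::{banach, ordered_real_vector, lattice})"
    and OP: "\<forall>n. order_projection (\<xi> n)" and FF: "forward_filtration B \<xi>"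
    and y: "(y::nat\<Rightarrow>'a) \<in> Mr (Lfilt \<xi>)"
  shows "unsh \<xi> y \<in> Mr \<xi>"
proof -
  obtain a b where a: "a \<in> Mb_pos (Lfilt \<xi>)" and b: "b \<in> Mb_pos (Lfilt \<xi>)" and ye: "y = (\<lambda>n. a n - b n)"
    using y unfolding Mr_def by blast
  show ?thesis unfolding ye unsh_diff[OF OP] Mr_def mem_Collect_eq
    by (rule bexI[OF bexI[OF _ unsh_Mb_pos[OF BL OP FF b]] unsh_Mb_pos[OF BL OP FF a]]) (rule refl)
qed

lemma sshift_Mb_pos:
  assumes a: "a \<in> Mb_pos \<xi>"
  shows "sshift a \<in> Mb_pos (Lfilt \<xi>)"
proof -
  obtain C where C: "\<forall>n\<ge>1. norm (a n) \<le> C" using a unfolding Mb_pos_def Mb_def by blast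
  have "\<forall>n\<ge>1. norm (sshift a n) \<le> C" using C unfolding sshift_def by auto
  moreover have "\<forall>n m. 1 \<le> n \<and> n \<le> m \<longrightarrow> Lfilt \<xi> (enat n) (sshift a m) = sshift a n"
    using a unfolding Mb_pos_def Mb_def sshift_def by (auto simp: Lfilt_enat)
  ultimately show ?thesis using a unfolding Mb_pos_def Mb_def sshift_def by auto
qed

lemma sshift_diff: "sshift (\<lambda>n. (a::nat\<Rightarrow>'a::real_vector) n - b n) = (\<lambda>n. sshift a n - sshift b n)"
  unfolding sshift_def by (rule ext) simp
lemma sshift_add: "sshift (\<lambda>n. (a::nat\<Rightarrow>'a::real_vector) n + b n) = (\<lambda>n. sshift a n + sshift b n)"
  unfolding sshift_def by (rule ext) simp
lemma sshift_scale: "sshift (\<lambda>n. c *\<^sub>R (a::nat\<Rightarrow>'a::real_vector) n) = (\<lambda>n. c *\<^sub>R sshift a n)"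
  unfolding sshift_def by (rule ext) simp

lemma sshift_Mr:
  assumes y: "y \<in> Mr \<xi>"
  shows "sshift y \<in> Mr (Lfilt \<xi>)"
proof -
  obtain a b where a: "a \<in> Mb_pos \<xi>" and b: "b \<in> Mb_pos \<xi>" and ye: "y = (\<lambda>n. a n - b n)"
    using y unfolding Mr_def by blast
  show ?thesis unfolding ye sshift_diff Mr_def mem_Collect_eq
    by (rule bexI[OF bexI[OF _ sshift_Mb_pos[OF b]] sshift_Mb_pos[OF a]]) (rule refl)
qed

lemma unsh_sshift:
  assumes OP: "\<forall>n. order_projection (\<xi> n)" and x: "x \<in> Mr \<xi>"
  shows "unsh \<xi> (sshift x) = x"
proof
  fix n show "unsh \<xi> (sshift x) n = x n"
    using Mr_zero[OF x] Mr_cond[OF OP x, of 1 2]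
    unfolding unsh_def sshift_def by (auto simp: numeral_2_eq_2)
qed

lemma Mb_pos_Mb: "y \<in> Mb_pos \<eta> \<Longrightarrow> y \<in> Mb \<eta>"
  unfolding Mb_pos_def by simp

lemma Mb_pos_nonneg: "y \<in> Mb_pos \<eta> \<Longrightarrow> 1 \<le> n \<Longrightarrow> 0 \<le> y n"
  unfolding Mb_pos_def by simp

lemma rnorm_unsh:
  assumes BL: "banach_lattice TYPE('a::{banach, ordered_real_vector, lattice})"
    and OP: "\<forall>n. order_projection (\<xi> n)" and FF: "forward_filtration B \<xi>"
    and u: "(u::nat\<Rightarrow>'a) \<in> Mr (Lfilt \<xi>)"
  shows "rnorm \<xi> (unsh \<xi> u) \<le> rnorm (Lfilt \<xi>) u"
proof (rule rnorm_le[OF Lfilt_OP[OF OP] u])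
  fix w assume w: "w \<in> Mb_pos (Lfilt \<xi>)" and d: "\<forall>n\<ge>1. u n \<le> w n \<and> - u n \<le> w n"
  have p1: "order_projection (\<xi> (enat 1))" using OP by blast
  have wMb: "w \<in> Mb (Lfilt \<xi>)" using w by (rule Mb_pos_Mb)
  have d': "\<forall>n\<ge>1. unsh \<xi> u n \<le> unsh \<xi> w n \<and> - unsh \<xi> u n \<le> unsh \<xi> w n"
  proof (intro allI impI)
    fix n :: nat assume n: "1 \<le> n"
    show "unsh \<xi> u n \<le> unsh \<xi> w n \<and> - unsh \<xi> u n \<le> unsh \<xi> w n"
    proof (cases "n = 1")
      case True
      have d1: "u 1 \<le> w 1" "- u 1 \<le> w 1" using d by simp_all
      have "\<xi> (enat 1) (u 1) \<le> \<xi> (enat 1) (w 1)" using op_mono[OF p1 d1(1)] .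
      moreover have "- \<xi> (enat 1) (u 1) \<le> \<xi> (enat 1) (w 1)"
        using op_mono[OF p1 d1(2)] unfolding linear_neg[OF op_linear[OF p1]] .
      ultimately show ?thesis using True by (simp add: unsh_def)
    next
      case False
      have "1 \<le> n - 1" using False n by arith
      then have "u (n - 1) \<le> w (n - 1) \<and> - u (n - 1) \<le> w (n - 1)" using d by blast
      then show ?thesis using False n by (simp add: unsh_def)
    qed
  qed
  have s: "(SUP n\<in>{1..}. norm (unsh \<xi> w n)) \<le> (SUP n\<in>{1..}. norm (w n))"
  proof (rule cSUP_least)
    show "{1::nat..} \<noteq> {}" by auto
  next
    fix n :: nat assume "n \<in> {1..}"
    then have n: "1 \<le> n" by simp
    show "norm (unsh \<xi> w n) \<le> (SUP n\<in>{1..}. norm (w n))"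
    proof (cases "n = 1")
      case True
      have "norm (\<xi> (enat 1) (w 1)) \<le> norm (w 1)" using op_norm[OF BL p1 Mb_pos_nonneg[OF w, of 1]] by simp
      also have "\<dots> \<le> (SUP n\<in>{1..}. norm (w n))" using Mb_le_SUP[OF wMb, of 1] by simp
      finally show ?thesis using True by (simp add: unsh_def)
    next
      case False
      have "1 \<le> n - 1" using False n by arith
      then have "norm (w (n - 1)) \<le> (SUP n\<in>{1..}. norm (w n))" by (rule Mb_le_SUP[OF wMb])
      then show ?thesis using False n by (simp add: unsh_def)
    qed
  qed
  show "\<exists>w'\<in>Mb_pos \<xi>. (\<forall>n\<ge>1. unsh \<xi> u n \<le> w' n \<and> - unsh \<xi> u n \<le> w' n)
          \<and> (SUP n\<in>{1..}. norm (w' n)) \<le> (SUP n\<in>{1..}. norm (w n))"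
    using conjI[OF d' s] unsh_Mb_pos[OF BL OP FF w] by (rule bexI)
qed

lemma rnorm_sshift:
  assumes OP: "\<forall>n. order_projection (\<xi> n)"
    and z: "(z::nat\<Rightarrow>'a::{banach, ordered_real_vector, lattice}) \<in> Mr \<xi>"
  shows "rnorm (Lfilt \<xi>) (sshift z) \<le> rnorm \<xi> z"
proof (rule rnorm_le[OF OP z])
  fix w assume w: "w \<in> Mb_pos \<xi>" and d: "\<forall>n\<ge>1. z n \<le> w n \<and> - z n \<le> w n"
  have wMb: "w \<in> Mb \<xi>" using w by (rule Mb_pos_Mb)
  have d': "\<forall>n\<ge>1. sshift z n \<le> sshift w n \<and> - sshift z n \<le> sshift w n"
  proof (intro allI impI)
    fix n :: nat assume n: "1 \<le> n"
    have "z (Suc n) \<le> w (Suc n) \<and> - z (Suc n) \<le> w (Suc n)" using d by simp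
    then show "sshift z n \<le> sshift w n \<and> - sshift z n \<le> sshift w n" using n by (simp add: sshift_def)
  qed
  have s: "(SUP n\<in>{1..}. norm (sshift w n)) \<le> (SUP n\<in>{1..}. norm (w n))"
  proof (rule cSUP_least)
    show "{1::nat..} \<noteq> {}" by auto
  next
    fix n :: nat assume "n \<in> {1..}"
    then have n: "1 \<le> n" by simp
    have "norm (w (Suc n)) \<le> (SUP n\<in>{1..}. norm (w n))" by (rule Mb_le_SUP[OF wMb]) simp
    then show "norm (sshift w n) \<le> (SUP n\<in>{1..}. norm (w n))" using n by (simp add: sshift_def)
  qed
  show "\<exists>w'\<in>Mb_pos (Lfilt \<xi>). (\<forall>n\<ge>1. sshift z n \<le> w' n \<and> - sshift z n \<le> w' n)
          \<and> (SUP n\<in>{1..}. norm (w' n)) \<le> (SUP n\<in>{1..}. norm (w n))"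
    using conjI[OF d' s] sshift_Mb_pos[OF w] by (rule bexI)
qed

lemma unsh_That:
  assumes OP: "\<forall>n. order_projection (\<xi> n)" and FF: "forward_filtration B \<xi>"
    and V: "B_volterra B T" and BB: "\<forall>n. \<xi> n \<in> B"
  shows "unsh \<xi> (That T (Lfilt \<xi>) y) = That T \<xi> (unsh \<xi> y)"
proof
  fix n :: nat
  show "unsh \<xi> (That T (Lfilt \<xi>) y) n = That T \<xi> (unsh \<xi> y) n"
  proof (cases "n = 0")
    case True then show ?thesis by (simp add: unsh_def That_def)
  next
    case n0: False
    show ?thesis
    proof (cases "n = 1")
      case True
      have p1: "order_projection (\<xi> (enat 1))" using OP by blast
      have "\<xi> (enat 1) (y 1) = \<xi> (enat 1) (\<xi> (enat 1) (y 1))" using op_idem[OF p1] by simp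
      then have v: "\<xi> (enat 1) (T (y 1)) = \<xi> (enat 1) (T (\<xi> (enat 1) (y 1)))"
        using V BB unfolding B_volterra_def by blast
      have "unsh \<xi> (That T (Lfilt \<xi>) y) n = \<xi> (enat 1) (\<xi> (enat 2) (T (y 1)))"
        using True by (simp add: unsh_def That_def Lfilt_enat numeral_2_eq_2)
      also have "\<dots> = \<xi> (enat 1) (T (y 1))" by (rule ff_12[OF FF])
      also have "\<dots> = That T \<xi> (unsh \<xi> y) n" using True v by (simp add: unsh_def That_def)
      finally show ?thesis .
    next
      case False
      then have "1 \<le> n - 1" using n0 by arith
      then have "Lfilt \<xi> (enat (n - 1)) = \<xi> (enat n)" using n0 by (simp add: Lfilt_enat)
      then show ?thesis using False n0 by (simp add: unsh_def That_def)
    qed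
  qed
qed

lemma sshift_That:
  shows "sshift (That T \<xi> z) = That T (Lfilt \<xi>) (sshift z)"
proof
  fix n :: nat
  show "sshift (That T \<xi> z) n = That T (Lfilt \<xi>) (sshift z) n"
  proof (cases "n = 0")
    case True then show ?thesis by (simp add: sshift_def That_def)
  next
    case False
    then have "Lfilt \<xi> (enat n) = \<xi> (enat (Suc n))" by (simp add: Lfilt_enat)
    then show ?thesis using False by (simp add: sshift_def That_def)
  qed
qed

lemma LTD:
  assumes "S \<in> LT T \<eta>1 \<eta>2"
  shows LTD1: "\<forall>x\<in>Mr \<eta>1. S x \<in> Mr \<eta>2"
    and LTD2: "\<forall>x\<in>Mr \<eta>1. \<forall>y\<in>Mr \<eta>1. S (\<lambda>n. x n + y n) = (\<lambda>n. S x n + S y n)"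
    and LTD3: "\<forall>c. \<forall>x\<in>Mr \<eta>1. S (\<lambda>n. c *\<^sub>R x n) = (\<lambda>n. c *\<^sub>R S x n)"
    and LTD4: "\<forall>x\<in>Mr \<eta>1. \<forall>e>0. \<exists>d>0. \<forall>y\<in>Mr \<eta>1.
          rnorm \<eta>1 (\<lambda>n. y n - x n) < d \<longrightarrow> rnorm \<eta>2 (\<lambda>n. S y n - S x n) < e"
    and LTD5: "\<forall>x\<in>Mr \<eta>1. S (That T \<eta>1 x) = That T \<eta>2 (S x)"
proof -
  have h: "(\<forall>x\<in>Mr \<eta>1. S x \<in> Mr \<eta>2)
     \<and> (\<forall>x\<in>Mr \<eta>1. \<forall>y\<in>Mr \<eta>1. S (\<lambda>n. x n + y n) = (\<lambda>n. S x n + S y n))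
     \<and> (\<forall>c. \<forall>x\<in>Mr \<eta>1. S (\<lambda>n. c *\<^sub>R x n) = (\<lambda>n. c *\<^sub>R S x n))
     \<and> (\<forall>x\<in>Mr \<eta>1. \<forall>e>0. \<exists>d>0. \<forall>y\<in>Mr \<eta>1.
          rnorm \<eta>1 (\<lambda>n. y n - x n) < d \<longrightarrow> rnorm \<eta>2 (\<lambda>n. S y n - S x n) < e)
     \<and> (\<forall>x\<in>Mr \<eta>1. S (That T \<eta>1 x) = That T \<eta>2 (S x))"
    using assms unfolding LT_def mem_Collect_eq .
  show "\<forall>x\<in>Mr \<eta>1. S x \<in> Mr \<eta>2" using h by (elim conjE) assumption
  show "\<forall>x\<in>Mr \<eta>1. \<forall>y\<in>Mr \<eta>1. S (\<lambda>n. x n + y n) = (\<lambda>n. S x n + S y n)" using h by (elim conjE) assumption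
  show "\<forall>c. \<forall>x\<in>Mr \<eta>1. S (\<lambda>n. c *\<^sub>R x n) = (\<lambda>n. c *\<^sub>R S x n)" using h by (elim conjE) assumption
  show "\<forall>x\<in>Mr \<eta>1. \<forall>e>0. \<exists>d>0. \<forall>y\<in>Mr \<eta>1.
          rnorm \<eta>1 (\<lambda>n. y n - x n) < d \<longrightarrow> rnorm \<eta>2 (\<lambda>n. S y n - S x n) < e" using h by (elim conjE) assumption
  show "\<forall>x\<in>Mr \<eta>1. S (That T \<eta>1 x) = That T \<eta>2 (S x)" using h by (elim conjE) assumption
qed

lemma LTI:
  assumes "\<forall>x\<in>Mr \<eta>1. S x \<in> Mr \<eta>2"
    and "\<forall>x\<in>Mr \<eta>1. \<forall>y\<in>Mr \<eta>1. S (\<lambda>n. x n + y n) = (\<lambda>n. S x n + S y n)"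
    and "\<forall>c. \<forall>x\<in>Mr \<eta>1. S (\<lambda>n. c *\<^sub>R x n) = (\<lambda>n. c *\<^sub>R S x n)"
    and "\<forall>x\<in>Mr \<eta>1. \<forall>e>0. \<exists>d>0. \<forall>y\<in>Mr \<eta>1.
          rnorm \<eta>1 (\<lambda>n. y n - x n) < d \<longrightarrow> rnorm \<eta>2 (\<lambda>n. S y n - S x n) < e"
    and "\<forall>x\<in>Mr \<eta>1. S (That T \<eta>1 x) = That T \<eta>2 (S x)"
  shows "S \<in> LT T \<eta>1 \<eta>2"
  unfolding LT_def mem_Collect_eq using assms by (intro conjI)

lemma LT_comp:
  assumes S1: "S1 \<in> LT T \<xi>1 \<xi>2" and S2: "S2 \<in> LT T \<xi>2 \<xi>3"
  shows "S2 \<circ> S1 \<in> LT T \<xi>1 \<xi>3"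
proof (rule LTI)
  note a1 = LTD1[OF S1] and a2 = LTD1[OF S2]
  show "\<forall>x\<in>Mr \<xi>1. (S2 \<circ> S1) x \<in> Mr \<xi>3" using a1 a2 by simp
  show "\<forall>x\<in>Mr \<xi>1. \<forall>y\<in>Mr \<xi>1. (S2 \<circ> S1) (\<lambda>n. x n + y n) = (\<lambda>n. (S2 \<circ> S1) x n + (S2 \<circ> S1) y n)"
  proof (intro ballI)
    fix x y assume x: "x \<in> Mr \<xi>1" and y: "y \<in> Mr \<xi>1"
    have "S1 (\<lambda>n. x n + y n) = (\<lambda>n. S1 x n + S1 y n)" using LTD2[OF S1] x y by blast
    moreover have "S2 (\<lambda>n. S1 x n + S1 y n) = (\<lambda>n. S2 (S1 x) n + S2 (S1 y) n)"
      using LTD2[OF S2] a1 x y by blast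
    ultimately show "(S2 \<circ> S1) (\<lambda>n. x n + y n) = (\<lambda>n. (S2 \<circ> S1) x n + (S2 \<circ> S1) y n)" by simp
  qed
  show "\<forall>c. \<forall>x\<in>Mr \<xi>1. (S2 \<circ> S1) (\<lambda>n. c *\<^sub>R x n) = (\<lambda>n. c *\<^sub>R (S2 \<circ> S1) x n)"
  proof (intro allI ballI)
    fix c x assume x: "x \<in> Mr \<xi>1"
    have "S1 (\<lambda>n. c *\<^sub>R x n) = (\<lambda>n. c *\<^sub>R S1 x n)" using LTD3[OF S1] x by blast
    moreover have "S2 (\<lambda>n. c *\<^sub>R S1 x n) = (\<lambda>n. c *\<^sub>R S2 (S1 x) n)"
      using LTD3[OF S2] a1 x by blast
    ultimately show "(S2 \<circ> S1) (\<lambda>n. c *\<^sub>R x n) = (\<lambda>n. c *\<^sub>R (S2 \<circ> S1) x n)" by simp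
  qed
  show "\<forall>x\<in>Mr \<xi>1. \<forall>e>0. \<exists>d>0. \<forall>y\<in>Mr \<xi>1.
          rnorm \<xi>1 (\<lambda>n. y n - x n) < d \<longrightarrow> rnorm \<xi>3 (\<lambda>n. (S2 \<circ> S1) y n - (S2 \<circ> S1) x n) < e"
  proof (intro ballI allI impI)
    fix x and e :: real assume x: "x \<in> Mr \<xi>1" and e: "e > 0"
    have Sx: "S1 x \<in> Mr \<xi>2" using a1 x by blast
    obtain d2 where d2: "d2 > 0" and h2: "\<forall>z\<in>Mr \<xi>2. rnorm \<xi>2 (\<lambda>n. z n - S1 x n) < d2 \<longrightarrow>
        rnorm \<xi>3 (\<lambda>n. S2 z n - S2 (S1 x) n) < e"
      using LTD4[OF S2] Sx e by blast
    obtain d1 where d1: "d1 > 0" and h1: "\<forall>y\<in>Mr \<xi>1. rnorm \<xi>1 (\<lambda>n. y n - x n) < d1 \<longrightarrow>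
        rnorm \<xi>2 (\<lambda>n. S1 y n - S1 x n) < d2"
      using LTD4[OF S1] x d2 by blast
    show "\<exists>d>0. \<forall>y\<in>Mr \<xi>1. rnorm \<xi>1 (\<lambda>n. y n - x n) < d \<longrightarrow> rnorm \<xi>3 (\<lambda>n. (S2 \<circ> S1) y n - (S2 \<circ> S1) x n) < e"
    proof (intro exI conjI ballI impI)
      show "d1 > 0" by (rule d1)
      fix y assume y: "y \<in> Mr \<xi>1" and r: "rnorm \<xi>1 (\<lambda>n. y n - x n) < d1"
      have "rnorm \<xi>2 (\<lambda>n. S1 y n - S1 x n) < d2" using h1 y r by blast
      moreover have "S1 y \<in> Mr \<xi>2" using a1 y by blast
      ultimately have "rnorm \<xi>3 (\<lambda>n. S2 (S1 y) n - S2 (S1 x) n) < e" using h2 by blast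
      then show "rnorm \<xi>3 (\<lambda>n. (S2 \<circ> S1) y n - (S2 \<circ> S1) x n) < e" by simp
    qed
  qed
  show "\<forall>x\<in>Mr \<xi>1. (S2 \<circ> S1) (That T \<xi>1 x) = That T \<xi>3 ((S2 \<circ> S1) x)"
  proof
    fix x assume x: "x \<in> Mr \<xi>1"
    have "S1 (That T \<xi>1 x) = That T \<xi>2 (S1 x)" using LTD5[OF S1] x by blast
    moreover have "S2 (That T \<xi>2 (S1 x)) = That T \<xi>3 (S2 (S1 x))" using LTD5[OF S2] a1 x by blast
    ultimately show "(S2 \<circ> S1) (That T \<xi>1 x) = That T \<xi>3 ((S2 \<circ> S1) x)" by simp
  qed
qed

lemma LT_shift:
  assumes BL: "banach_lattice TYPE('a::{banach, ordered_real_vector, lattice})"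
    and OP1: "\<forall>n. order_projection (\<xi>1 n)" and OP2: "\<forall>n. order_projection (\<xi>2 n)"
    and FF1: "forward_filtration B \<xi>1" and V: "B_volterra B (T::'a\<Rightarrow>'a)"
    and BB1: "\<forall>n. \<xi>1 n \<in> B"
    and S: "S \<in> LT T \<xi>1 \<xi>2"
  shows "\<exists>LS \<in> LT T (Lfilt \<xi>1) (Lfilt \<xi>2). \<forall>x \<in> Mr \<xi>1. LS (sshift x) = sshift (S x)"
proof
  define LS where "LS = (\<lambda>y. sshift (S (unsh \<xi>1 y)))"
  have um: "unsh \<xi>1 y \<in> Mr \<xi>1" if "y \<in> Mr (Lfilt \<xi>1)" for y
    by (rule unsh_Mr[OF BL OP1 FF1 that])
  have Sm: "S z \<in> Mr \<xi>2" if "z \<in> Mr \<xi>1" for z using LTD1[OF S] that by blast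
  show "\<forall>x\<in>Mr \<xi>1. LS (sshift x) = sshift (S x)"
    unfolding LS_def using unsh_sshift[OF OP1] by simp
  show "LS \<in> LT T (Lfilt \<xi>1) (Lfilt \<xi>2)"
  proof (rule LTI)
    show "\<forall>x\<in>Mr (Lfilt \<xi>1). LS x \<in> Mr (Lfilt \<xi>2)"
      unfolding LS_def using sshift_Mr Sm um by blast
    show "\<forall>x\<in>Mr (Lfilt \<xi>1). \<forall>y\<in>Mr (Lfilt \<xi>1). LS (\<lambda>n. x n + y n) = (\<lambda>n. LS x n + LS y n)"
    proof (intro ballI)
      fix x y assume x: "x \<in> Mr (Lfilt \<xi>1)" and y: "y \<in> Mr (Lfilt \<xi>1)"
      have "S (\<lambda>n. unsh \<xi>1 x n + unsh \<xi>1 y n) = (\<lambda>n. S (unsh \<xi>1 x) n + S (unsh \<xi>1 y) n)"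
        using LTD2[OF S] um[OF x] um[OF y] by blast
      then show "LS (\<lambda>n. x n + y n) = (\<lambda>n. LS x n + LS y n)"
        unfolding LS_def unsh_add[OF OP1] by (simp add: sshift_add)
    qed
    show "\<forall>c. \<forall>x\<in>Mr (Lfilt \<xi>1). LS (\<lambda>n. c *\<^sub>R x n) = (\<lambda>n. c *\<^sub>R LS x n)"
    proof (intro allI ballI)
      fix c x assume x: "x \<in> Mr (Lfilt \<xi>1)"
      have "S (\<lambda>n. c *\<^sub>R unsh \<xi>1 x n) = (\<lambda>n. c *\<^sub>R S (unsh \<xi>1 x) n)"
        using LTD3[OF S] um[OF x] by blast
      then show "LS (\<lambda>n. c *\<^sub>R x n) = (\<lambda>n. c *\<^sub>R LS x n)"
        unfolding LS_def unsh_scale[OF OP1] by (simp add: sshift_scale)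
    qed
    show "\<forall>x\<in>Mr (Lfilt \<xi>1). \<forall>e>0. \<exists>d>0. \<forall>y\<in>Mr (Lfilt \<xi>1).
          rnorm (Lfilt \<xi>1) (\<lambda>n. y n - x n) < d \<longrightarrow> rnorm (Lfilt \<xi>2) (\<lambda>n. LS y n - LS x n) < e"
    proof (intro ballI allI impI)
      fix x and e :: real assume x: "x \<in> Mr (Lfilt \<xi>1)" and e: "e > 0"
      obtain d where d: "d > 0" and h: "\<forall>y\<in>Mr \<xi>1. rnorm \<xi>1 (\<lambda>n. y n - unsh \<xi>1 x n) < d \<longrightarrow>
          rnorm \<xi>2 (\<lambda>n. S y n - S (unsh \<xi>1 x) n) < e"
        using LTD4[OF S] um[OF x] e by blast
      show "\<exists>d>0. \<forall>y\<in>Mr (Lfilt \<xi>1).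
          rnorm (Lfilt \<xi>1) (\<lambda>n. y n - x n) < d \<longrightarrow> rnorm (Lfilt \<xi>2) (\<lambda>n. LS y n - LS x n) < e"
      proof (intro exI conjI ballI impI)
        show "d > 0" by (rule d)
        fix y assume y: "y \<in> Mr (Lfilt \<xi>1)" and r: "rnorm (Lfilt \<xi>1) (\<lambda>n. y n - x n) < d"
        have yx: "(\<lambda>n. y n - x n) \<in> Mr (Lfilt \<xi>1)" by (rule Mr_diff[OF Lfilt_OP[OF OP1] y x])
        have "rnorm \<xi>1 (unsh \<xi>1 (\<lambda>n. y n - x n)) \<le> rnorm (Lfilt \<xi>1) (\<lambda>n. y n - x n)"
          by (rule rnorm_unsh[OF BL OP1 FF1 yx])
        then have "rnorm \<xi>1 (\<lambda>n. unsh \<xi>1 y n - unsh \<xi>1 x n) < d"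
          using r unfolding unsh_diff[OF OP1] by linarith
        then have r2: "rnorm \<xi>2 (\<lambda>n. S (unsh \<xi>1 y) n - S (unsh \<xi>1 x) n) < e"
          using h um[OF y] by blast
        have zm: "(\<lambda>n. S (unsh \<xi>1 y) n - S (unsh \<xi>1 x) n) \<in> Mr \<xi>2"
          by (rule Mr_diff[OF OP2 Sm[OF um[OF y]] Sm[OF um[OF x]]])
        have "rnorm (Lfilt \<xi>2) (sshift (\<lambda>n. S (unsh \<xi>1 y) n - S (unsh \<xi>1 x) n))
            \<le> rnorm \<xi>2 (\<lambda>n. S (unsh \<xi>1 y) n - S (unsh \<xi>1 x) n)"
          by (rule rnorm_sshift[OF OP2 zm])
        then show "rnorm (Lfilt \<xi>2) (\<lambda>n. LS y n - LS x n) < e"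
          using r2 unfolding LS_def sshift_diff by linarith
      qed
    qed
    show "\<forall>x\<in>Mr (Lfilt \<xi>1). LS (That T (Lfilt \<xi>1) x) = That T (Lfilt \<xi>2) (LS x)"
    proof
      fix x assume x: "x \<in> Mr (Lfilt \<xi>1)"
      have "S (That T \<xi>1 (unsh \<xi>1 x)) = That T \<xi>2 (S (unsh \<xi>1 x))" using LTD5[OF S] um[OF x] by blast
      then show "LS (That T (Lfilt \<xi>1) x) = That T (Lfilt \<xi>2) (LS x)"
        unfolding LS_def unsh_That[OF OP1 FF1 V BB1] by (simp add: sshift_That)
    qed
  qed
qed

theorem proposition4p17:
  fixes T :: "'a::{banach, ordered_real_vector, lattice} \<Rightarrow> 'a"
    and B :: "('a \<Rightarrow> 'a) set"
    and \<xi>1 \<xi>2 \<xi>3 :: "enat \<Rightarrow> 'a \<Rightarrow> 'a"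
  assumes "banach_lattice TYPE('a)"
    and "order_continuous_norm TYPE('a)"
    and "boolean_subalgebra B"
    and "B_volterra B T"
    and "forward_filtration B \<xi>1"
    and "forward_filtration B \<xi>2"
    and "forward_filtration B \<xi>3"
  shows "(\<forall>S1 S2. S1 \<in> LT T \<xi>1 \<xi>2 \<and> S2 \<in> LT T \<xi>2 \<xi>3 \<longrightarrow> S2 \<circ> S1 \<in> LT T \<xi>1 \<xi>3)
    \<and> (\<forall>S \<in> LT T \<xi>1 \<xi>2. \<exists>LS \<in> LT T (Lfilt \<xi>1) (Lfilt \<xi>2).
          \<forall>x \<in> Mr \<xi>1. LS (sshift x) = sshift (S x))"
proof (intro conjI allI impI ballI)
  fix S1 S2 assume "S1 \<in> LT T \<xi>1 \<xi>2 \<and> S2 \<in> LT T \<xi>2 \<xi>3"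
  then show "S2 \<circ> S1 \<in> LT T \<xi>1 \<xi>3" using LT_comp by blast
next
  fix S assume S: "S \<in> LT T \<xi>1 \<xi>2"
  have Bsub: "\<And>p. p \<in> B \<Longrightarrow> order_projection p" using assms(3) unfolding boolean_subalgebra_def by blast
  have BB1: "\<forall>n. \<xi>1 n \<in> B" using assms(5) unfolding forward_filtration_def by blast
  have BB2: "\<forall>n. \<xi>2 n \<in> B" using assms(6) unfolding forward_filtration_def by blast
  have OP1: "\<forall>n. order_projection (\<xi>1 n)" using BB1 Bsub by blast
  have OP2: "\<forall>n. order_projection (\<xi>2 n)" using BB2 Bsub by blast
  show "\<exists>LS \<in> LT T (Lfilt \<xi>1) (Lfilt \<xi>2). \<forall>x \<in> Mr \<xi>1. LS (sshift x) = sshift (S x)"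
    by (rule LT_shift[OF assms(1) OP1 OP2 assms(5) assms(4) BB1 S])
qed

end
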